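(* Let $M=p_1^{n_1}\cdots p_K^{n_K}$ with distinct primes and $n_\nu\in\mathbb{N}$, let $A\oplus B=\mathbb{Z}_M$, and fix $i$. Suppose $0\in B$ and that the tiling has $A$-uniform $(B,A)$ splitting parity in the $p_i$ direction, i.e. every fiber $a*F_i$ with $a\in A$ splits with parity $(B,A)$. Then $\Phi_{p_i^{n_i}}(X)\mid A(X)$.
   Context: $A\oplus B=\mathbb{Z}_M$ means every element of $\mathbb{Z}_M$ is uniquely $a+b$ with $a\in A$, $b\in B$. $A(X)=\sum_{a\in A}X^a$ with $A$ viewed in $\{0,\dots,M-1\}$; $\Phi_s$ is the $s$-th cyclotomic polynomial. $F_i=\{0,M/p_i,\dots,(p_i-1)M/p_i\}$, $x*F_i=\{x+f:f\in F_i\}$. For $Z\subset\mathbb{Z}_M$, $\Sigma_A(Z)=\{a\in A: a+b\in Z\text{ for some }b\in B\}$, $\Sigma_B(Z)=\{b\in B: a+b\in Z\text{ for some }a\in A\}$. A fiber $Z=x*F_i$ splits with parity $(B,A)$ if $p_i^{n_i}\mid b-b'$ for all $b,b'\in\Sigma_B(Z)$ and, for all distinct $a,a'\in\Sigma_A(Z)$, $p_i^{n_i-1}\mid a-a'$ but $p_i^{n_i}\nmid a-a'$. *)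

theory Defs
  imports "HOL-Analysis.Analysis" "HOL-Computational_Algebra.Computational_Algebra"
begin

definition cyclotomic :: "nat \<Rightarrow> complex poly" where
  "cyclotomic s = (\<Prod>k\<in>{k. 1 \<le> k \<and> k \<le> s \<and> coprime k s}.
       [:- cis (2 * pi * real k / real s), 1:])"

definition mask_poly :: "nat set \<Rightarrow> complex poly" where
  "mask_poly A = (\<Sum>a\<in>A. monom 1 a)"

definition tiling :: "nat \<Rightarrow> nat set \<Rightarrow> nat set \<Rightarrow> bool" where
  "tiling M A B \<longleftrightarrow> A \<subseteq> {0..<M} \<and> B \<subseteq> {0..<M} \<and>
     (\<forall>x\<in>{0..<M}. \<exists>!(a, b). a \<in> A \<and> b \<in> B \<and> (a + b) mod M = x)"

(* x * F_i = {x + f : f \<in> F_i}, F_i = {0, M/p, ..., (p-1)M/p} *)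
definition fiber :: "nat \<Rightarrow> nat \<Rightarrow> nat \<Rightarrow> nat set" where
  "fiber M p x = {(x + k * (M div p)) mod M | k. k < p}"

definition SigmaA :: "nat \<Rightarrow> nat set \<Rightarrow> nat set \<Rightarrow> nat set \<Rightarrow> nat set" where
  "SigmaA M A B Z = {a \<in> A. \<exists>b\<in>B. (a + b) mod M \<in> Z}"

definition SigmaB :: "nat \<Rightarrow> nat set \<Rightarrow> nat set \<Rightarrow> nat set \<Rightarrow> nat set" where
  "SigmaB M A B Z = {b \<in> B. \<exists>a\<in>A. (a + b) mod M \<in> Z}"

(* fiber Z in the p direction splits with parity (B,A); n = exponent of p in M *)
definition splits_BA :: "nat \<Rightarrow> nat \<Rightarrow> nat \<Rightarrow> nat set \<Rightarrow> nat set \<Rightarrow> nat set \<Rightarrow> bool" where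
  "splits_BA M p n A B Z \<longleftrightarrow>
     (\<forall>b\<in>SigmaB M A B Z. \<forall>b'\<in>SigmaB M A B Z. int (p ^ n) dvd (int b - int b')) \<and>
     (\<forall>a\<in>SigmaA M A B Z. \<forall>a'\<in>SigmaA M A B Z. a \<noteq> a' \<longrightarrow>
        int (p ^ (n - 1)) dvd (int a - int a') \<and> \<not> int (p ^ n) dvd (int a - int a'))"

end

theory Submission
  imports Defs "HOL-Number_Theory.Cong"
begin

lemma prod_roots_dvd:
  fixes f :: "complex poly" and r :: "nat \<Rightarrow> complex"
  assumes "finite S" "inj_on r S" "\<forall>k\<in>S. poly f (r k) = 0"
  shows "(\<Prod>k\<in>S. [:- r k, 1:]) dvd f"
  using assms
proof (induction S arbitrary: f rule: finite_induct)
  case empty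
  then show ?case by simp
next
  case (insert x F)
  have "poly f (r x) = 0" using insert(5) by simp
  then have "[:- r x, 1:] dvd f" by (simp add: poly_eq_0_iff_dvd)
  then obtain g where g: "f = [:- r x, 1:] * g" by (rule dvdE)
  have "\<forall>k\<in>F. poly g (r k) = 0"
  proof
    fix k assume k: "k \<in> F"
    have "r k \<noteq> r x" using inj_on_eq_iff[OF insert(4), of k x] k insert(2) by auto
    moreover have "poly f (r k) = 0" using insert(5) k by simp
    ultimately show "poly g (r k) = 0" using g by simp
  qed
  moreover have "inj_on r F" using insert(4) by (simp add: inj_on_insert)
  ultimately have "(\<Prod>k\<in>F. [:- r k, 1:]) dvd g" using insert(3) by blast
  then have "[:- r x, 1:] * (\<Prod>k\<in>F. [:- r k, 1:]) dvd [:- r x, 1:] * g" by (rule mult_dvd_mono[OF dvd_refl])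
  moreover have "(\<Prod>k\<in>insert x F. [:- r k, 1:]) = [:- r x, 1:] * (\<Prod>k\<in>F. [:- r k, 1:])"
    using insert(1,2) by (rule prod.insert)
  ultimately show ?case using g by simp
qed

lemma cis_inj:
  assumes "s > 0"
  shows "inj_on (\<lambda>k::nat. cis (2 * pi * real k / real s)) {k. 1 \<le> k \<and> k \<le> s \<and> coprime k s}"
proof -
  have *: "k = k'" if "k' < k" "k \<le> s" "1 \<le> k'" "cis (2 * pi * real k / real s) = cis (2 * pi * real k' / real s)" for k k' :: nat
  proof -
    have "cis (2 * pi * real k / real s - 2 * pi * real k' / real s) = cis (2 * pi * real k / real s) / cis (2 * pi * real k' / real s)"
      by (simp add: cis_divide)
    also have "\<dots> = 1" using that(4) by simp
    finally have c1: "cis (2 * pi * real k / real s - 2 * pi * real k' / real s) = 1" .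
    have e: "2 * pi * real k / real s - 2 * pi * real k' / real s = 2 * pi * (real k - real k') / real s"
      using assms by (simp add: diff_divide_distrib algebra_simps)
    have "0 < 2 * pi * (real k - real k') / real s"
      using that assms by (simp add: field_simps)
    moreover have "2 * pi * (real k - real k') / real s < 2 * pi"
    proof -
      have "real k - real k' < real s" using that by linarith
      then have "(real k - real k') / real s < 1" using assms by (simp add: divide_less_eq)
      then have "2 * pi * ((real k - real k') / real s) < 2 * pi * 1"
        by (intro mult_strict_left_mono) auto
      then show ?thesis by simp
    qed
    ultimately have "exp (\<i> * complex_of_real (2 * pi * (real k - real k') / real s)) \<noteq> 1"
      by (rule exp_i_ne_1)
    then have "cis (2 * pi * (real k - real k') / real s) \<noteq> 1"
      unfolding cis_conv_exp .
    then show ?thesis using c1 e by simp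
  qed
  show ?thesis
  proof (rule inj_onI)
    fix k k' assume k: "k \<in> {k. 1 \<le> k \<and> k \<le> s \<and> coprime k s}" and k': "k' \<in> {k. 1 \<le> k \<and> k \<le> s \<and> coprime k s}"
      and eq: "cis (2 * pi * real k / real s) = cis (2 * pi * real k' / real s)"
    show "k = k'"
    proof (cases k k' rule: linorder_cases)
      case less have "k' = k" by (rule *) (use less k k' eq in auto) then show ?thesis by simp
    next
      case equal then show ?thesis .
    next
      case greater show ?thesis by (rule *) (use greater k k' eq in auto)
    qed
  qed
qed

theorem corollary4p9:
  fixes M p :: nat and A B :: "nat set"
  assumes "M > 0"
    and "prime p" and "p dvd M"
    and "tiling M A B"
    and "0 \<in> B"
    and "\<forall>a\<in>A. splits_BA M p (multiplicity p M) A B (fiber M p a)"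
  shows "cyclotomic (p ^ multiplicity p M) dvd mask_poly A"
proof -
  define n where "n = multiplicity p M"
  define q where "q = p ^ n"
  define d where "d = M div p"
  have p1: "p > 1" using assms(2) prime_gt_1_nat by blast
  have nunit: "\<not> is_unit p" using assms(2) by auto
  have n1: "n \<ge> 1" unfolding n_def using multiplicity_gt_zero_iff[of M p] assms nunit by simp
  obtain m' where Mdec: "M = p ^ n * m'" and pm': "\<not> p dvd m'"
    using multiplicity_decompose'[of M p] assms(1) nunit unfolding n_def by auto
  have qM: "q dvd M" unfolding q_def using Mdec by simp
  have q0: "q > 0" unfolding q_def using p1 by simp
  have dform: "d = p ^ (n - 1) * m'"
  proof -
    have "M = p * (p ^ (n - 1) * m')" using Mdec n1
      by (metis mult.assoc power_eq_if not_one_le_zero)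
    then show ?thesis unfolding d_def using p1 by simp
  qed
  have AM: "A \<subseteq> {0..<M}" and BM: "B \<subseteq> {0..<M}"
    and uniq: "\<forall>x\<in>{0..<M}. \<exists>!(a, b). a \<in> A \<and> b \<in> B \<and> (a + b) mod M = x"
    using assms(4) unfolding tiling_def by auto
  have finA: "finite A" using AM finite_subset by blast
  have "\<forall>a\<in>A. \<exists>a' b. a' \<in> A \<and> b \<in> B \<and> (a' + b) mod M = (a + d) mod M"
  proof
    fix a assume "a \<in> A"
    have "(a + d) mod M \<in> {0..<M}" using assms(1) by simp
    then show "\<exists>a' b. a' \<in> A \<and> b \<in> B \<and> (a' + b) mod M = (a + d) mod M"
      using uniq by fast
  qed
  then obtain \<phi> \<beta> where phib: "\<And>a. a \<in> A \<Longrightarrow> \<phi> a \<in> A \<and> \<beta> a \<in> B \<and> (\<phi> a + \<beta> a) mod M = (a + d) mod M"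
    by metis
  have phimod: "\<phi> a mod q = (a + d) mod q" if a: "a \<in> A" for a
  proof -
    have sp: "splits_BA M p n A B (fiber M p a)" using assms(6) a unfolding n_def by blast
    have aM: "a < M" using a AM by auto
    have "\<beta> a \<in> SigmaB M A B (fiber M p a)"
    proof -
      have "(\<phi> a + \<beta> a) mod M \<in> fiber M p a"
        unfolding fiber_def using phib[OF a] p1 d_def by (auto intro!: exI[of _ 1])
      then show ?thesis unfolding SigmaB_def using phib[OF a] by blast
    qed
    moreover have "0 \<in> SigmaB M A B (fiber M p a)"
    proof -
      have "(a + 0) mod M \<in> fiber M p a"
        unfolding fiber_def using p1 by (auto intro!: exI[of _ 0])
      then show ?thesis unfolding SigmaB_def using a assms(5) by blast
    qed
    ultimately have "int q dvd int (\<beta> a) - int 0"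
      using sp unfolding splits_BA_def q_def by blast
    then have bq: "\<beta> a mod q = 0" by simp
    have "(\<phi> a + \<beta> a) mod q = (a + d) mod q"
      using phib[OF a] qM by (metis mod_mod_cancel)
    then show ?thesis using bq by (metis add.right_neutral mod_add_right_eq)
  qed
  have injphi: "inj_on \<phi> A"
  proof (rule inj_onI)
    fix a a' assume a: "a \<in> A" and a': "a' \<in> A" and eq: "\<phi> a = \<phi> a'"
    have c1: "[\<phi> a + \<beta> a = a + d] (mod M)" using phib[OF a] by (simp add: cong_def)
    have c2: "[\<phi> a + \<beta> a' = a' + d] (mod M)" using phib[OF a'] eq by (simp add: cong_def)
    have "[a + \<beta> a' + d = a' + \<beta> a + d] (mod M)"
    proof -
      have A1: "[a + d + \<beta> a' = \<phi> a + \<beta> a + \<beta> a'] (mod M)"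
        by (rule cong_add[OF cong_sym[OF c1] cong_refl])
      have B1: "[a' + d + \<beta> a = \<phi> a + \<beta> a' + \<beta> a] (mod M)"
        by (rule cong_add[OF cong_sym[OF c2] cong_refl])
      have e1: "a + \<beta> a' + d = a + d + \<beta> a'" by simp
      have e2: "\<phi> a + \<beta> a + \<beta> a' = \<phi> a + \<beta> a' + \<beta> a" by simp
      have e3: "a' + \<beta> a + d = a' + d + \<beta> a" by simp
      have A2: "[a + \<beta> a' + d = \<phi> a + \<beta> a + \<beta> a'] (mod M)" using A1 e1 by (simp only:)
      have B2: "[a' + \<beta> a + d = \<phi> a + \<beta> a + \<beta> a'] (mod M)" using B1 e2 e3 by (simp only:)
      show ?thesis by (rule cong_trans[OF A2 cong_sym[OF B2]])
    qed
    then have "[a + \<beta> a' = a' + \<beta> a] (mod M)" by (simp only: cong_add_rcancel_nat)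
    then have m: "(a + \<beta> a') mod M = (a' + \<beta> a) mod M" by (simp add: cong_def)
    have "(a + \<beta> a') mod M \<in> {0..<M}" using assms(1) by simp
    then have h: "\<exists>!(x, y). x \<in> A \<and> y \<in> B \<and> (x + y) mod M = (a + \<beta> a') mod M" using uniq by blast
    define P where "P = (\<lambda>(x, y). x \<in> A \<and> y \<in> B \<and> (x + y) mod M = (a + \<beta> a') mod M)"
    have h': "\<exists>!w. P w" using h unfolding P_def .
    have P1: "P (a, \<beta> a')"
      unfolding P_def using a phib[OF a'] by simp
    have P2: "P (a', \<beta> a)"
      unfolding P_def using a' phib[OF a] m by simp
    from h' obtain w where "P w" and w: "\<forall>y. P y \<longrightarrow> y = w" by (rule ex1E)
    have "(a, \<beta> a') = (a', \<beta> a)" using w[rule_format, OF P1] w[rule_format, OF P2] by simp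
    then show "a = a'" by simp
  qed
  have "\<phi> ` A \<subseteq> A" using phib by auto
  then have imA: "\<phi> ` A = A" by (rule endo_inj_surj[OF finA _ injphi])
  have roots: "\<forall>k\<in>{k. 1 \<le> k \<and> k \<le> q \<and> coprime k q}.
       poly (mask_poly A) (cis (2 * pi * real k / real q)) = 0"
  proof
    fix k assume k: "k \<in> {k. 1 \<le> k \<and> k \<le> q \<and> coprime k q}"
    define z where "z = cis (2 * pi * real k / real q)"
    have zq: "z ^ q = 1"
    proof -
      have "z ^ q = cis (real q * (2 * pi * real k / real q))" unfolding z_def by (rule Complex.DeMoivre)
      also have "real q * (2 * pi * real k / real q) = 2 * pi * real k" using q0 by simp
      also have "cis (2 * pi * real k) = 1"
        using exp_2pi_1_nat[of k] unfolding cis_conv_exp by (simp add: mult_ac)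
      finally show ?thesis .
    qed
    have zmod: "z ^ j = z ^ (j mod q)" for j
    proof -
      have "z ^ j = z ^ (q * (j div q) + j mod q)" by (simp only: mult_div_mod_eq)
      also have "\<dots> = z ^ (j mod q)" by (simp only: power_add power_mult zq power_one mult_1)
      finally show ?thesis .
    qed
    have zd: "z ^ d \<noteq> 1"
    proof
      assume h: "z ^ d = 1"
      have "d * p = M" unfolding d_def using assms(3) by simp
      then have "d * p = q * m'" using Mdec q_def by simp
      then have "real d * real p = real q * real m'" by (metis of_nat_mult)
      then have dr: "real d = real q * real m' / real p" using p1 by (simp add: field_simps)
      have "z ^ d = cis (real d * (2 * pi * real k / real q))" unfolding z_def by (rule Complex.DeMoivre)
      also have "real d * (2 * pi * real k / real q) = 2 * pi * real (k * m') / real p"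
        unfolding dr using q0 p1 by (simp add: field_simps)
      finally have "z ^ d = cis (2 * pi * real (k * m') / real p)" .
      then have "exp (2 * complex_of_real pi * \<i> * of_nat (k * m') / of_nat p) = 1"
        using h by (simp add: cis_conv_exp mult.commute mult.left_commute)
      then have "p dvd k * m'" using complex_root_unity_eq_1[of p "k * m'"] p1 by simp
      then have "p dvd k" using pm' assms(2) prime_dvd_mult_iff by blast
      moreover have "coprime k q" using k by simp
      moreover have "p dvd q" unfolding q_def using n1 by (cases n) auto
      ultimately show False using coprime_common_divisor nunit by blast
    qed
    have P: "poly (mask_poly A) z = (\<Sum>a\<in>A. z ^ a)"
      unfolding mask_poly_def by (simp add: poly_sum poly_monom)
    have "(\<Sum>a\<in>A. z ^ a) = (\<Sum>a\<in>A. z ^ \<phi> a)"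
      using sum.reindex[OF injphi, of "\<lambda>a. z ^ a"] imA by simp
    also have "\<dots> = (\<Sum>a\<in>A. z ^ (a + d))"
    proof (rule sum.cong)
      fix a assume a: "a \<in> A"
      have "z ^ \<phi> a = z ^ (\<phi> a mod q)" by (rule zmod)
      also have "\<dots> = z ^ ((a + d) mod q)" using phimod[OF a] by (simp only:)
      also have "\<dots> = z ^ (a + d)" by (rule zmod[symmetric])
      finally show "z ^ \<phi> a = z ^ (a + d)" .
    qed simp
    also have "\<dots> = z ^ d * (\<Sum>a\<in>A. z ^ a)"
      by (simp add: power_add sum_distrib_left mult.commute)
    finally have "(1 - z ^ d) * (\<Sum>a\<in>A. z ^ a) = 0" by (simp add: algebra_simps)
    then have "(\<Sum>a\<in>A. z ^ a) = 0" using zd by simp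
    then show "poly (mask_poly A) (cis (2 * pi * real k / real q)) = 0" using P z_def by simp
  qed
  show ?thesis
    unfolding cyclotomic_def n_def[symmetric] q_def[symmetric]
    by (rule prod_roots_dvd) (use cis_inj q0 roots in auto)
qed

end
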